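(* Let $\mathcal{I}$ be an interval hypergraph on $[n]$ closed under intersection. Then for every $j\in\mathcal{J}_{\mathcal{I}}$, the acyclic orientation $A_j$ is join irreducible in the lattice $P_{\mathcal{I}}$.
   Context: An interval hypergraph $\mathcal{I}$ on $[n]$ is a collection of intervals of $[n]$ containing all singletons; it is closed under intersection if $I,J\in\mathcal{I}$, $I\cap J\ne\varnothing$ imply $I\cap J\in\mathcal{I}$. An orientation is a map $O:\mathcal{I}\to[n]$ with $O(I)\in I$; it is acyclic if there are no $H_1,\dots,H_k$, $k\ge2$, with $O(H_{i+1})\in H_i\setminus\{O(H_i)\}$ for $i\in[k-1]$ and $O(H_1)\in H_k\setminus\{O(H_k)\}$. Orientations $O\ne O'$ are related by an increasing flip (from $O$ to $O'$) if there exist $1\le i<j\le n$ such that for all $H$: if $O(H)\ne O'(H)$ then $O(H)=i$, $O'(H)=j$; and if $\{i,j\}\subseteq H$ then $O(H)=i\iff O'(H)=j$. $P_{\mathcal{I}}$ is the transitive closure of the increasing flip relation on acyclic orientations (a lattice here). Let $\mathcal{J}_{\mathcal{I}}=\bigcup_{I\in\mathcal{I}}I\setminus\{\min I\}$. For $j\in\mathcal{J}_{\mathcal{I}}$ let $J_j=\bigcap\{I\in\mathcal{I}: j\in I\setminus\{\min I\}\}$ and $\mu_j=\min J_j$. For a permutation $\pi$, $\mathrm{Or}_\pi(I)=\pi(\min\{k:\pi(k)\in I\})$. Define $A_j=\mathrm{Or}_\pi$ for the permutation $\pi=1\,2\cdots(\mu_j-1)\,j\,\mu_j\cdots(j-1)\,(j+1)\cdots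 n$ (one-line notation); explicitly $A_j(J)=j$ if $j\in J$ and $\min J=\mu_j$, and $A_j(J)=\min J$ otherwise. An element of a lattice is join irreducible if it is not the minimum and covers exactly one element. *)

theory Defs
  imports Main "HOL-Library.FuncSet"
begin

definition intervals_of :: "nat \<Rightarrow> nat set set" where
  "intervals_of n = {{a..b} | a b. 1 \<le> a \<and> a \<le> b \<and> b \<le> n}"

definition interval_hypergraph :: "nat \<Rightarrow> nat set set \<Rightarrow> bool" where
  "interval_hypergraph n \<I> \<longleftrightarrow> \<I> \<subseteq> intervals_of n \<and> (\<forall>i\<in>{1..n}. {i} \<in> \<I>)"

definition closed_under_intersection :: "nat set set \<Rightarrow> bool" where
  "closed_under_intersection \<I> \<longleftrightarrow>
     (\<forall>I\<in>\<I>. \<forall>J\<in>\<I>. I \<inter> J \<noteq> {} \<longrightarrow> I \<inter> J \<in> \<I>)"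

definition orientations :: "nat set set \<Rightarrow> (nat set \<Rightarrow> nat) set" where
  "orientations \<I> = (\<Pi>\<^sub>E I\<in>\<I>. I)"

definition acyclic_orientation :: "nat set set \<Rightarrow> (nat set \<Rightarrow> nat) \<Rightarrow> bool" where
  "acyclic_orientation \<I> Ori \<longleftrightarrow> Ori \<in> orientations \<I> \<and>
     \<not> (\<exists>Hs. length Hs \<ge> 2 \<and> set Hs \<subseteq> \<I> \<and>
           (\<forall>i. i + 1 < length Hs \<longrightarrow> Ori (Hs ! (i + 1)) \<in> Hs ! i - {Ori (Hs ! i)}) \<and>
           Ori (Hs ! 0) \<in> last Hs - {Ori (last Hs)})"

definition increasing_flip :: "nat \<Rightarrow> nat set set \<Rightarrow> (nat set \<Rightarrow> nat) \<Rightarrow> (nat set \<Rightarrow> nat) \<Rightarrow> bool" where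
  "increasing_flip n \<I> Ori Q \<longleftrightarrow> Ori \<noteq> Q \<and>
     (\<exists>i j. 1 \<le> i \<and> i < j \<and> j \<le> n \<and>
        (\<forall>H\<in>\<I>. (Ori H \<noteq> Q H \<longrightarrow> Ori H = i \<and> Q H = j) \<and>
                 ({i, j} \<subseteq> H \<longrightarrow> (Ori H = i \<longleftrightarrow> Q H = j))))"

definition P_carrier :: "nat set set \<Rightarrow> (nat set \<Rightarrow> nat) set" where
  "P_carrier \<I> = {Ori. acyclic_orientation \<I> Ori}"

definition flip_rel :: "nat \<Rightarrow> nat set set \<Rightarrow> ((nat set \<Rightarrow> nat) \<times> (nat set \<Rightarrow> nat)) set" where
  "flip_rel n \<I> = {(Ori, Q). Ori \<in> P_carrier \<I> \<and> Q \<in> P_carrier \<I> \<and> increasing_flip n \<I> Ori Q}"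

definition P_le :: "nat \<Rightarrow> nat set set \<Rightarrow> (nat set \<Rightarrow> nat) \<Rightarrow> (nat set \<Rightarrow> nat) \<Rightarrow> bool" where
  "P_le n \<I> Ori Q \<longleftrightarrow> Ori \<in> P_carrier \<I> \<and> Q \<in> P_carrier \<I> \<and>
     (Ori = Q \<or> (Ori, Q) \<in> (flip_rel n \<I>)\<^sup>+)"

definition covers :: "'a set \<Rightarrow> ('a \<Rightarrow> 'a \<Rightarrow> bool) \<Rightarrow> 'a \<Rightarrow> 'a \<Rightarrow> bool" where
  "covers C le x y \<longleftrightarrow> x \<in> C \<and> y \<in> C \<and> le y x \<and> y \<noteq> x \<and>
     \<not> (\<exists>z\<in>C. le y z \<and> y \<noteq> z \<and> le z x \<and> z \<noteq> x)"

definition join_irreducible :: "'a set \<Rightarrow> ('a \<Rightarrow> 'a \<Rightarrow> bool) \<Rightarrow> 'a \<Rightarrow> bool" where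
  "join_irreducible C le x \<longleftrightarrow> x \<in> C \<and> \<not> (\<forall>y\<in>C. le x y) \<and> (\<exists>!y. covers C le x y)"

definition JJ :: "nat set set \<Rightarrow> nat set" where
  "JJ \<I> = (\<Union>I\<in>\<I>. I - {Min I})"

definition J_of :: "nat set set \<Rightarrow> nat \<Rightarrow> nat set" where
  "J_of \<I> j = \<Inter> {I \<in> \<I>. j \<in> I - {Min I}}"

definition mu :: "nat set set \<Rightarrow> nat \<Rightarrow> nat" where
  "mu \<I> j = Min (J_of \<I> j)"

text \<open>Or_pi for a permutation pi of [n] given in one-line notation as a list:
  the first entry of pi lying in I.\<close>
definition Or_perm :: "nat set set \<Rightarrow> nat list \<Rightarrow> nat set \<Rightarrow> nat" where
  "Or_perm \<I> \<pi> = restrict (\<lambda>I. hd (filter (\<lambda>x. x \<in> I) \<pi>)) \<I>"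

definition perm_A :: "nat \<Rightarrow> nat set set \<Rightarrow> nat \<Rightarrow> nat list" where
  "perm_A n \<I> j = [1..<mu \<I> j] @ [j] @ [mu \<I> j..<j] @ [j+1..<n+1]"

definition A_or :: "nat \<Rightarrow> nat set set \<Rightarrow> nat \<Rightarrow> nat set \<Rightarrow> nat" where
  "A_or n \<I> j = Or_perm \<I> (perm_A n \<I> j)"

end

theory Submission
  imports Defs
begin

lemma Min_ivl[simp]: "a \<le> b \<Longrightarrow> Min {a..b} = (a::nat)"
  by (intro Min_eqI) auto

lemma upt_split: "l \<le> a \<Longrightarrow> a < m \<Longrightarrow> [l..<m] = [l..<a] @ a # [Suc a..<m]"
  by (metis less_imp_add_positive upt_add_eq_append upt_conv_Cons)

lemma hd_filter_split: "xs = ys @ x # zs \<Longrightarrow> \<forall>y\<in>set ys. \<not> P y \<Longrightarrow> P x \<Longrightarrow> hd (filter P xs) = x"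
  by simp

lemma acyclic_by_rank:
  assumes "Q \<in> orientations I"
    and "\<And>H x. H \<in> I \<Longrightarrow> x \<in> H \<Longrightarrow> x \<noteq> Q H \<Longrightarrow> r (Q H) < (r x :: nat)"
  shows "acyclic_orientation I Q"
proof -
  { fix Hs assume len: "length Hs \<ge> 2" and s: "set Hs \<subseteq> I"
      and st: "\<forall>i. i+1 < length Hs \<longrightarrow> Q (Hs!(i+1)) \<in> Hs!i - {Q (Hs!i)}"
      and lst: "Q (Hs!0) \<in> last Hs - {Q (last Hs)}"
    have step: "r (Q (Hs!i)) < r (Q (Hs!(i+1)))" if "i+1 < length Hs" for i
    proof -
      have "Hs!i \<in> I" using s that by (meson Suc_lessD add_lessD1 nth_mem subset_iff)
      then show ?thesis using st that assms(2)[of "Hs!i" "Q (Hs!(i+1))"] by auto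
    qed
    have k: "r (Q (Hs!0)) + k \<le> r (Q (Hs!k))" if "k < length Hs" for k
      using that
    proof (induction k)
      case 0 show ?case by simp
    next
      case (Suc k) then show ?case using step[of k] by simp
    qed
    have ne: "Hs \<noteq> []" using len by auto
    then have "last Hs \<in> I" using s by auto
    then have "r (Q (last Hs)) < r (Q (Hs!0))" using lst assms(2) by auto
    moreover have "last Hs = Hs ! (length Hs - 1)" using ne by (simp add: last_conv_nth)
    ultimately have "r (Q (Hs ! (length Hs - 1))) < r (Q (Hs!0))" by simp
    moreover have "r (Q (Hs!0)) + (length Hs - 1) \<le> r (Q (Hs ! (length Hs - 1)))"
      using k[of "length Hs - 1"] len by simp
    ultimately have False using len by linarith
  }
  then show ?thesis using assms(1) unfolding acyclic_orientation_def by blast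
qed

lemma inter_closed_fam:
  assumes cl: "closed_under_intersection I" and "finite F" "F \<noteq> {}" "F \<subseteq> I" "j \<in> \<Inter>F"
  shows "\<Inter>F \<in> I"
  using assms(2-5)
proof (induction F rule: finite_ne_induct)
  case (singleton x) then show ?case by simp
next
  case (insert x F)
  then have "\<Inter>F \<in> I" "x \<in> I" "x \<inter> \<Inter>F \<noteq> {}" by auto
  then have "x \<inter> \<Inter>F \<in> I" using cl unfolding closed_under_intersection_def by blast
  then show ?case by simp
qed

locale L =
  fixes n :: nat and I :: "nat set set" and j :: nat
  assumes hyp: "interval_hypergraph n I" and cl: "closed_under_intersection I" and jJ: "j \<in> JJ I"
begin

abbreviation "mj \<equiv> mu I j"
abbreviation "Jj \<equiv> J_of I j"

lemma ivl: "H \<in> I \<Longrightarrow> \<exists>a b. H = {a..b} \<and> 1 \<le> a \<and> a \<le> b \<and> b \<le> n"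
  using hyp unfolding interval_hypergraph_def intervals_of_def by auto

lemma ivl_ne: "H \<in> I \<Longrightarrow> Min H \<in> H"
  using ivl[of H] by auto

lemma ivl_Min: "H \<in> I \<Longrightarrow> x \<in> H \<Longrightarrow> Min H \<le> x \<and> Min H \<in> H \<and> 1 \<le> Min H \<and> x \<le> n"
  using ivl[of H] by auto

lemma ivl_conv: "H \<in> I \<Longrightarrow> y \<in> H \<Longrightarrow> Min H \<le> x \<Longrightarrow> x \<le> y \<Longrightarrow> x \<in> H"
  using ivl[of H] by auto

definition F where "F = {H \<in> I. j \<in> H - {Min H}}"

lemma F_sub: "F \<subseteq> I" unfolding F_def by auto

lemma F_ne: "F \<noteq> {}" using jJ unfolding F_def JJ_def by auto

lemma fin_ivls: "finite (intervals_of n)"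
proof -
  have "intervals_of n \<subseteq> Pow {1..n}" unfolding intervals_of_def by auto
  then show ?thesis by (meson finite_Pow_iff finite_atLeastAtMost finite_subset)
qed

lemma F_fin: "finite F"
  using F_sub hyp fin_ivls unfolding interval_hypergraph_def by (meson finite_subset order_trans)

lemma Jj_def': "Jj = \<Inter>F" unfolding J_of_def F_def by simp

lemma F_mem: "H \<in> F \<Longrightarrow> j \<in> H \<and> j - 1 \<in> H"
proof -
  assume H: "H \<in> F"
  then have "H \<in> I" "j \<in> H" "j \<noteq> Min H" unfolding F_def by auto
  moreover then have "Min H \<le> j - 1" using ivl_Min[of H j] by auto
  ultimately show ?thesis using ivl_conv[of H j "j - 1"] by auto
qed

lemma Jj_in: "Jj \<in> I" and j_in: "j \<in> Jj" and j1_in: "j - 1 \<in> Jj"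
proof -
  show "j \<in> Jj" "j - 1 \<in> Jj" unfolding Jj_def' using F_mem by auto
  then show "Jj \<in> I" unfolding Jj_def' using inter_closed_fam[OF cl F_fin F_ne F_sub, of j] by auto
qed

lemma mj_lt: "mj < j" and mj_ge: "1 \<le> mj" and j_le: "j \<le> n"
proof -
  have "j \<noteq> 0"
  proof
    assume "j = 0"
    then show False using jJ ivl unfolding JJ_def by fastforce
  qed
  have "mj \<le> j - 1" unfolding mu_def using ivl_Min[OF Jj_in j1_in] by auto
  then show "mj < j" using \<open>j \<noteq> 0\<close> by simp
  show "1 \<le> mj" "j \<le> n" unfolding mu_def using ivl_Min[OF Jj_in j_in] by auto
qed

lemma Jj_Min: "Min Jj = mj" unfolding mu_def by simp

lemma P3: "H \<in> I \<Longrightarrow> j \<in> H \<Longrightarrow> Min H < j \<Longrightarrow> Min H \<le> mj"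
proof -
  assume a: "H \<in> I" "j \<in> H" "Min H < j"
  then have "H \<in> F" unfolding F_def by auto
  then have "Jj \<subseteq> H" unfolding Jj_def' by auto
  then have "mj \<in> H" using ivl_Min[OF Jj_in j_in] Jj_Min by auto
  then show ?thesis using ivl_Min a by auto
qed

lemma S_conv: "H \<in> I \<Longrightarrow> j \<in> H \<Longrightarrow> Min H = mj \<Longrightarrow> mj \<le> x \<Longrightarrow> x \<le> j \<Longrightarrow> x \<in> H"
  using ivl_conv by auto

definition Ori :: "nat \<Rightarrow> nat set \<Rightarrow> nat" where
  "Ori i = restrict (\<lambda>H. if j \<in> H \<and> Min H = mj then i else Min H) I"

lemma Ori_Jj: "Ori i Jj = i"
  unfolding Ori_def using Jj_in j_in Jj_Min by simp

lemma Ori_inj: "Ori a = Ori b \<Longrightarrow> a = b"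
  using Ori_Jj by metis

lemma Ori_orient: "mj \<le> i \<Longrightarrow> i \<le> j \<Longrightarrow> Ori i \<in> orientations I"
  unfolding orientations_def Ori_def using S_conv ivl_ne by (auto simp: PiE_def)

lemma A_eq: "A_or n I j = Ori j"
proof
  fix H
  show "A_or n I j H = Ori j H"
  proof (cases "H \<in> I")
    case False then show ?thesis unfolding A_or_def Or_perm_def Ori_def by simp
  next
    case True
    then obtain a b where H: "H = {a..b}" "1 \<le> a" "a \<le> b" "b \<le> n" using ivl by blast
    have MH: "Min H = a" using H by simp
    let ?P = "\<lambda>x. x \<in> H"
    have hdv: "hd (filter ?P (perm_A n I j)) = (if mj \<le> a \<and> j \<in> H then j else a)"
    proof (cases "a < mj")
      case True
      have "perm_A n I j = [1..<a] @ a # ([Suc a..<mj] @ [j] @ [mj..<j] @ [j+1..<n+1])"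
        unfolding perm_A_def using upt_split[OF H(2) True] by simp
      then show ?thesis using True H by (intro trans[OF hd_filter_split]) auto
    next
      case False
      show ?thesis
      proof (cases "j \<in> H")
        case True
        have "perm_A n I j = [1..<mj] @ j # ([mj..<j] @ [j+1..<n+1])"
          unfolding perm_A_def by simp
        then show ?thesis using True False H by (intro trans[OF hd_filter_split]) auto
      next
        case jn: False
        show ?thesis
        proof (cases "a < j")
          case True
          have e: "perm_A n I j = ([1..<mj] @ [j] @ [mj..<a]) @ a # ([Suc a..<j] @ [j+1..<n+1])"
            unfolding perm_A_def using upt_split[of mj a j] True False by simp
          have "hd (filter ?P (perm_A n I j)) = a"
            by (rule hd_filter_split[OF e]) (use True False jn H in auto)
          then show ?thesis using jn by simp
        next
          case ge: False
          then have "j < a" using jn H by auto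
          then have e: "perm_A n I j = ([1..<mj] @ [j] @ [mj..<j] @ [j+1..<a]) @ a # [Suc a..<n+1]"
            unfolding perm_A_def using upt_split[of "j+1" a "n+1"] H by simp
          have "hd (filter ?P (perm_A n I j)) = a"
            by (rule hd_filter_split[OF e]) (use ge False jn H \<open>j < a\<close> in auto)
          then show ?thesis using jn by simp
        qed
      qed
    qed
    have "A_or n I j H = (if mj \<le> a \<and> j \<in> H then j else a)"
      unfolding A_or_def Or_perm_def using True hdv by simp
    also have "\<dots> = Ori j H"
    proof -
      have "mj \<le> a \<and> j \<in> H \<longleftrightarrow> (j \<in> H \<and> a = mj) \<or> (j \<in> H \<and> a = j)"
        using P3[OF True] MH mj_lt ivl_Min[OF True, of j] by force
      then show ?thesis unfolding Ori_def using True MH by auto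
    qed
    finally show ?thesis .
  qed
qed

abbreviation "C \<equiv> P_carrier I"
abbreviation "R \<equiv> flip_rel n I"

lemma carrier_orient: "x \<in> C \<Longrightarrow> x \<in> orientations I"
  unfolding P_carrier_def acyclic_orientation_def by simp

lemma Ori_app: "H \<in> I \<Longrightarrow> Ori i H = (if j \<in> H \<and> Min H = mj then i else Min H)"
  unfolding Ori_def by simp

lemma Ori_j_C: "Ori j \<in> C"
proof -
  define r where "r x = (if x = j then 2*mj - 1 else 2*x)" for x
  have "acyclic_orientation I (Ori j)"
  proof (rule acyclic_by_rank[where r = r])
    show "Ori j \<in> orientations I" using Ori_orient mj_lt by simp
  next
    fix H x assume H: "H \<in> I" and x: "x \<in> H" and ne: "x \<noteq> Ori j H"
    have m: "Min H \<le> x" "1 \<le> Min H" using ivl_Min[OF H x] by auto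
    show "r (Ori j H) < r x"
    proof (cases "j \<in> H \<and> Min H = mj")
      case True
      then show ?thesis using ne m mj_ge unfolding r_def Ori_app[OF H] by auto
    next
      case False
      then have O: "Ori j H = Min H" using Ori_app[OF H, of j] by presburger
      then have lt: "Min H < x" using ne m by auto
      show ?thesis
      proof (cases "x = j")
        case True
        then have "Min H \<le> mj" using P3[OF H] x lt by auto
        then have "Min H < mj" using False True x by auto
        then show ?thesis using O True mj_lt unfolding r_def by auto
      next
        case xj: False
        show ?thesis
        proof (cases "Min H = j")
          case True then show ?thesis using O xj lt mj_lt unfolding r_def by auto
        next
          case False then show ?thesis using O xj lt unfolding r_def by auto
        qed
      qed
    qed
  qed
  then show ?thesis unfolding P_carrier_def by simp
qed

lemma Ori_mj_C: "Ori mj \<in> C"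
proof -
  have "acyclic_orientation I (Ori mj)"
  proof (rule acyclic_by_rank[where r = id])
    show "Ori mj \<in> orientations I" using Ori_orient mj_lt by simp
  next
    fix H x assume H: "H \<in> I" and x: "x \<in> H" and ne: "x \<noteq> Ori mj H"
    have "Ori mj H = Min H" using Ori_app[OF H] by auto
    then show "id (Ori mj H) < id x" using ivl_Min[OF H x] ne by auto
  qed
  then show ?thesis unfolding P_carrier_def by simp
qed

lemma flip_mono: "(x,y) \<in> R \<Longrightarrow> H \<in> I \<Longrightarrow> x H \<le> y H"
proof -
  assume xy: "(x,y) \<in> R" and H: "H \<in> I"
  then obtain i k where "i < k" "x H \<noteq> y H \<longrightarrow> x H = i \<and> y H = k"
    unfolding flip_rel_def increasing_flip_def by blast
  then show ?thesis by (cases "x H = y H") auto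
qed

lemma rtrancl_mono: "(x,y) \<in> R\<^sup>* \<Longrightarrow> H \<in> I \<Longrightarrow> x H \<le> y H"
proof (induction rule: rtrancl_induct)
  case base then show ?case by simp
next
  case (step y z) then show ?case using flip_mono[of y z H] by simp
qed

lemma le_mono: "P_le n I x y \<Longrightarrow> H \<in> I \<Longrightarrow> x H \<le> y H"
  unfolding P_le_def using rtrancl_mono[of x y H] trancl_into_rtrancl[of x y R] by auto

lemma ext_eqo: "x \<in> orientations I \<Longrightarrow> y \<in> orientations I \<Longrightarrow> (\<And>H. H \<in> I \<Longrightarrow> x H = y H) \<Longrightarrow> x = y"
  unfolding orientations_def by (rule PiE_ext)

lemma ext_eq: "x \<in> C \<Longrightarrow> y \<in> C \<Longrightarrow> (\<And>H. H \<in> I \<Longrightarrow> x H = y H) \<Longrightarrow> x = y"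
  using carrier_orient ext_eqo by blast

definition valid where "valid i \<longleftrightarrow> mj \<le> i \<and> i < j \<and> (Ori i, Ori j) \<in> R"

lemma pred:
  assumes zR: "(z, Ori j) \<in> R"
  shows "\<exists>i. z = Ori i \<and> valid i"
proof -
  have zC: "z \<in> C" and fl: "increasing_flip n I z (Ori j)" using zR unfolding flip_rel_def by auto
  then obtain i k where ik: "1 \<le> i" "i < k" "k \<le> n"
    and c: "\<And>H. H \<in> I \<Longrightarrow> (z H \<noteq> Ori j H \<longrightarrow> z H = i \<and> Ori j H = k) \<and>
                 ({i, k} \<subseteq> H \<longrightarrow> (z H = i \<longleftrightarrow> Ori j H = k))"
    and zne: "z \<noteq> Ori j"
    unfolding increasing_flip_def by blast
  have zo: "z \<in> orientations I" using carrier_orient[OF zC] .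
  obtain H0 where H0: "H0 \<in> I" "z H0 \<noteq> Ori j H0"
    using ext_eq[OF zC Ori_j_C] zne by blast
  then have zH0: "z H0 = i" "Ori j H0 = k" using c by auto
  have "z H0 \<in> H0" using zo H0 unfolding orientations_def by auto
  then have iH0: "i \<in> H0" "Min H0 \<le> i" using zH0 ivl_Min[OF H0(1)] by auto
  have S0: "j \<in> H0 \<and> Min H0 = mj"
  proof (rule ccontr)
    assume nS: "\<not> (j \<in> H0 \<and> Min H0 = mj)"
    have "Ori j H0 = Min H0" unfolding Ori_app[OF H0(1)] by (rule if_not_P[OF nS])
    then show False using zH0 iH0 ik by simp
  qed
  then have kj: "k = j" using zH0 Ori_app[OF H0(1)] by simp
  have imj: "mj \<le> i" using iH0 S0 by simp
  have ij: "i < j" using ik kj by simp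
  have "z = Ori i"
  proof (rule ext_eqo[OF zo])
    show "Ori i \<in> orientations I" using Ori_orient imj ij by simp
  next
    fix H assume H: "H \<in> I"
    have zH: "z H \<in> H" using zo H unfolding orientations_def by auto
    show "z H = Ori i H"
    proof (cases "j \<in> H \<and> Min H = mj")
      case True
      then have "{i, k} \<subseteq> H" using S_conv[OF H, of i] imj ij kj by auto
      then show ?thesis using c[OF H] True Ori_app[OF H] kj by auto
    next
      case False
      have O: "Ori j H = Min H" "Ori i H = Min H" unfolding Ori_app[OF H] by (rule if_not_P[OF False], rule if_not_P[OF False])
      show ?thesis
      proof (rule ccontr)
        assume "z H \<noteq> Ori i H"
        then have "z H = i" "Min H = j" using c[OF H] O kj by auto
        then show False using ivl_Min[OF H zH] ij by simp
      qed
    qed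
  qed
  then show ?thesis using imj ij zR unfolding valid_def by blast
qed

lemma Ori_S: "H \<in> I \<Longrightarrow> j \<in> H \<and> Min H = mj \<Longrightarrow> Ori i H = i"
  using Ori_app by simp

lemma Ori_nS: "H \<in> I \<Longrightarrow> \<not> (j \<in> H \<and> Min H = mj) \<Longrightarrow> Ori i H = Min H"
  unfolding Ori_app by (rule if_not_P)

lemma Jj_S: "j \<in> Jj \<and> Min Jj = mj" using j_in Jj_Min by simp

lemma valid_mj: "valid mj"
proof -
  have "increasing_flip n I (Ori mj) (Ori j)"
    unfolding increasing_flip_def
  proof (intro conjI exI ballI)
    show "Ori mj \<noteq> Ori j" using Ori_inj mj_lt by fastforce
    show "1 \<le> mj" "mj < j" "j \<le> n" using mj_ge mj_lt j_le by auto
  next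
    fix H assume H: "H \<in> I"
    show "Ori mj H \<noteq> Ori j H \<longrightarrow> Ori mj H = mj \<and> Ori j H = j"
      by (cases "j \<in> H \<and> Min H = mj") (simp_all add: Ori_S[OF H] Ori_nS[OF H])
    show "{mj, j} \<subseteq> H \<longrightarrow> (Ori mj H = mj \<longleftrightarrow> Ori j H = j)"
    proof (cases "j \<in> H \<and> Min H = mj")
      case True then show ?thesis by (simp add: Ori_S[OF H])
    next
      case False
      show ?thesis
      proof
        assume sub: "{mj, j} \<subseteq> H"
        then have "Min H \<le> mj" using ivl_Min[OF H, of mj] by auto
        then have "Min H \<noteq> j" "Min H \<noteq> mj" using mj_lt False sub by auto
        then show "(Ori mj H = mj \<longleftrightarrow> Ori j H = j)" by (simp add: Ori_nS[OF H False])
      qed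
    qed
  qed
  then show ?thesis unfolding valid_def flip_rel_def using Ori_mj_C Ori_j_C mj_lt by auto
qed

lemma valid_C: "valid i \<Longrightarrow> Ori i \<in> C"
  unfolding valid_def flip_rel_def by auto

lemma chain:
  assumes va: "valid a" and vb: "valid b" and ab: "a < b"
  shows "(Ori a, Ori b) \<in> R"
proof -
  have ra: "mj \<le> a" "a < j" and rb: "mj \<le> b" "b < j" using va vb unfolding valid_def by auto
  have bacyc: "acyclic_orientation I (Ori b)" using valid_C[OF vb] unfolding P_carrier_def by simp
  have "increasing_flip n I (Ori a) (Ori b)"
    unfolding increasing_flip_def
  proof (intro conjI exI ballI)
    show "Ori a \<noteq> Ori b" using Ori_inj ab by fastforce
    show "1 \<le> a" "a < b" "b \<le> n" using mj_ge ra rb ab j_le by auto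
  next
    fix H assume H: "H \<in> I"
    show "Ori a H \<noteq> Ori b H \<longrightarrow> Ori a H = a \<and> Ori b H = b"
      by (cases "j \<in> H \<and> Min H = mj") (simp_all add: Ori_S[OF H] Ori_nS[OF H])
    show "{a, b} \<subseteq> H \<longrightarrow> (Ori a H = a \<longleftrightarrow> Ori b H = b)"
    proof (cases "j \<in> H \<and> Min H = mj")
      case True then show ?thesis by (simp add: Ori_S[OF H])
    next
      case False
      show ?thesis
      proof
        assume sub: "{a, b} \<subseteq> H"
        then have "Min H \<le> a" using ivl_Min[OF H, of a] by auto
        then have nb: "Min H \<noteq> b" using ab by auto
        have na: "Min H \<noteq> a"
        proof
          assume mH: "Min H = a"
          have OH: "Ori b H = a" using Ori_nS[OF H False] mH by simp
          have OJ: "Ori b Jj = b" by (rule Ori_Jj)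
          have aJ: "a \<in> Jj" using S_conv[OF Jj_in] Jj_S ra by auto
          let ?Hs = "[Jj, H]"
          have "length ?Hs \<ge> 2 \<and> set ?Hs \<subseteq> I \<and>
           (\<forall>i. i + 1 < length ?Hs \<longrightarrow> Ori b (?Hs ! (i + 1)) \<in> ?Hs ! i - {Ori b (?Hs ! i)}) \<and>
           Ori b (?Hs ! 0) \<in> last ?Hs - {Ori b (last ?Hs)}"
            using Jj_in H OH OJ aJ sub ab by auto
          then show False using bacyc unfolding acyclic_orientation_def by blast
        qed
        show "(Ori a H = a \<longleftrightarrow> Ori b H = b)" using na nb by (simp add: Ori_nS[OF H False])
      qed
    qed
  qed
  then show ?thesis unfolding flip_rel_def using valid_C[OF va] valid_C[OF vb] by auto
qed

abbreviation "le \<equiv> P_le n I"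

lemma below:
  assumes "le y (Ori j)" "y \<noteq> Ori j"
  shows "\<exists>i. valid i \<and> le y (Ori i)"
proof -
  have yC: "y \<in> C" and tr: "(y, Ori j) \<in> R\<^sup>+" using assms unfolding P_le_def by auto
  obtain z where yz: "(y, z) \<in> R\<^sup>*" and zj: "(z, Ori j) \<in> R" using tranclD2[OF tr] by blast
  obtain i where zi: "z = Ori i" and vi: "valid i" using pred[OF zj] by blast
  have "y = z \<or> (y, z) \<in> R\<^sup>+" using yz by (meson rtrancl_eq_or_trancl)
  then have "le y (Ori i)" unfolding P_le_def using yC valid_C[OF vi] zi by auto
  then show ?thesis using vi by blast
qed

lemma valid_lt: "valid i \<Longrightarrow> i < j" unfolding valid_def by simp

lemma valid_le: "valid i \<Longrightarrow> le (Ori i) (Ori j)"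
  unfolding P_le_def valid_def using Ori_j_C valid_C by (auto simp: valid_def)

lemma covered_valid:
  assumes cv: "covers C le (Ori j) y"
  shows "\<exists>i. valid i \<and> y = Ori i"
proof -
  have yC: "y \<in> C" and l: "le y (Ori j)" and ne: "y \<noteq> Ori j"
    and no: "\<not> (\<exists>z\<in>C. le y z \<and> y \<noteq> z \<and> le z (Ori j) \<and> z \<noteq> Ori j)"
    using cv unfolding covers_def by auto
  obtain i where vi: "valid i" and yi: "le y (Ori i)" using below[OF l ne] by blast
  have "Ori i \<noteq> Ori j" using Ori_inj valid_lt[OF vi] by fastforce
  then have "y = Ori i" using no valid_C[OF vi] yi valid_le[OF vi] by blast
  then show ?thesis using vi by blast
qed

lemma not_cov_lt:
  assumes va: "valid a" and vb: "valid b" and ab: "a < b"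
  shows "\<not> covers C le (Ori j) (Ori a)"
proof -
  have "le (Ori a) (Ori b)" unfolding P_le_def using chain[OF va vb ab] valid_C va vb by blast
  moreover have "Ori a \<noteq> Ori b" "Ori b \<noteq> Ori j" using Ori_inj ab valid_lt[OF vb] by fastforce+
  ultimately show ?thesis unfolding covers_def using valid_C[OF vb] valid_le[OF vb] by blast
qed

lemma main: "join_irreducible C le (Ori j)"
proof -
  have nmin: "\<not> (\<forall>y\<in>C. le (Ori j) y)"
  proof
    assume "\<forall>y\<in>C. le (Ori j) y"
    then have "le (Ori j) (Ori mj)" using Ori_mj_C by blast
    then have "Ori j Jj \<le> Ori mj Jj" using le_mono Jj_in by blast
    then show False using Ori_Jj mj_lt by simp
  qed
  define V where "V = Collect valid"
  have finV: "finite V" unfolding V_def using valid_lt by (metis finite_nat_set_iff_bounded mem_Collect_eq)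
  have neV: "V \<noteq> {}" unfolding V_def using valid_mj by blast
  define s where "s = Max V"
  have vs: "valid s" using Max_in[OF finV neV] unfolding s_def V_def by simp
  have smax: "valid i \<Longrightarrow> i \<le> s" for i using Max_ge[OF finV] unfolding s_def V_def by simp
  have cov: "covers C le (Ori j) (Ori s)"
    unfolding covers_def
  proof (intro conjI)
    show "Ori j \<in> C" "Ori s \<in> C" "le (Ori s) (Ori j)" using Ori_j_C valid_C[OF vs] valid_le[OF vs] by auto
    show "Ori s \<noteq> Ori j" using Ori_inj valid_lt[OF vs] by fastforce
    show "\<not> (\<exists>z\<in>C. le (Ori s) z \<and> Ori s \<noteq> z \<and> le z (Ori j) \<and> z \<noteq> Ori j)"
    proof
      assume "\<exists>z\<in>C. le (Ori s) z \<and> Ori s \<noteq> z \<and> le z (Ori j) \<and> z \<noteq> Ori j"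
      then obtain z where zC: "z \<in> C" and sz: "le (Ori s) z" and nsz: "Ori s \<noteq> z"
        and zj: "le z (Ori j)" and nzj: "z \<noteq> Ori j" by blast
      obtain i where vi: "valid i" and zi: "le z (Ori i)" using below[OF zj nzj] by blast
      have "s \<le> i" using le_mono[OF sz Jj_in] le_mono[OF zi Jj_in] Ori_Jj by simp
      then have "i = s" using smax[OF vi] by simp
      then have "z = Ori s"
        using ext_eq[OF zC valid_C[OF vs]] le_mono[OF sz] le_mono[OF zi] by (meson antisym)
      then show False using nsz by simp
    qed
  qed
  have uniq: "y = Ori s" if cy: "covers C le (Ori j) y" for y
  proof -
    obtain i where vi: "valid i" and yi: "y = Ori i" using covered_valid[OF cy] by blast
    have "\<not> i < s" using not_cov_lt[OF vi vs] cy yi by blast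
    then have "i = s" using smax[OF vi] by simp
    then show ?thesis using yi by simp
  qed
  show ?thesis unfolding join_irreducible_def using Ori_j_C nmin cov uniq by blast
qed

end

theorem proposition5p18:
  fixes n :: nat and \<I> :: "nat set set" and j :: nat
  assumes "interval_hypergraph n \<I>"
    and "closed_under_intersection \<I>"
    and "j \<in> JJ \<I>"
  shows "join_irreducible (P_carrier \<I>) (P_le n \<I>) (A_or n \<I> j)"
proof -
  interpret L n \<I> j using assms by unfold_locales
  show ?thesis using main A_eq by simp
qed

end
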